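(* Let $ZM(m,n,r)$ be a ZM-group with $m=p^{\alpha}$ and $n=q_1^{\beta_1}q_2^{\beta_2}\cdots q_s^{\beta_s}$, where $p,q_1,\dots,q_s$ are primes ($q_1,\dots,q_s$ distinct) and $\alpha,\beta_1,\dots,\beta_s$ are positive integers. Let $A=\{i\in\{1,\dots,s\} : q_i\mid p-1\}$. If $\alpha\ge \max_{i\in A}\beta_i$, then $ZM(m,n,r)$ is not $\psi$-divisible.
   Context: For a finite group $G$, $\psi(G)=\sum_{x\in G} o(x)$ denotes the sum of the orders of all elements of $G$. A finite group $G$ is called $\psi$-divisible if $\psi(H)$ divides $\psi(G)$ for every subgroup $H$ of $G$. For positive integers $m,n,r$ with $\gcd(m,n)=\gcd(m,r-1)=1$ and $r^n\equiv 1\pmod m$, the ZM-group is $ZM(m,n,r)=\langle a,b \mid a^m=b^n=1,\ b^{-1}ab=a^r\rangle$, a group of order $mn$. *)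

theory Defs
  imports "HOL-Algebra.Algebra" "HOL-Number_Theory.Number_Theory"
begin

text \<open>Concrete model of ZM(m,n,r): the pair (i,j) represents the element b^j a^i.
  Multiplication: (b^j a^i)(b^l a^k) = b^(j+l) a^(i r^l + k), using b^(-l) a b^l = a^(r^l).\<close>
definition ZM :: "nat \<Rightarrow> nat \<Rightarrow> nat \<Rightarrow> (nat \<times> nat) monoid" where
  "ZM m n r = \<lparr>carrier = {0..<m} \<times> {0..<n},
     monoid.mult = (\<lambda>x y. ((fst x * r ^ snd y + fst y) mod m, (snd x + snd y) mod n)),
     monoid.one = (0, 0)\<rparr>"

definition psi :: "('a, 'b) monoid_scheme \<Rightarrow> nat" where
  "psi G = (\<Sum>x\<in>carrier G. group.ord G x)"

definition psi_divisible :: "('a, 'b) monoid_scheme \<Rightarrow> bool" where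
  "psi_divisible G \<longleftrightarrow> (\<forall>H. subgroup H G \<longrightarrow> psi (G\<lparr>carrier := H\<rparr>) dvd psi G)"

end

theory Submission
  imports Defs
begin

lemma rpow_mod:
  assumes "[r ^ n = 1] (mod m)"
  shows "[r ^ (a mod n) = r ^ a] (mod (m::nat))"
proof -
  have e: "r ^ a = (r ^ n) ^ (a div n) * r ^ (a mod n)"
  proof -
    have "r ^ a = r ^ (n * (a div n) + a mod n)" by simp
    also have "\<dots> = (r^n)^(a div n) * r^(a mod n)" by (simp only: power_add power_mult)
    finally show ?thesis .
  qed
  have "[(r ^ n) ^ (a div n) * r ^ (a mod n) = 1 ^ (a div n) * r ^ (a mod n)] (mod m)"
    by (intro cong_mult cong_pow assms cong_refl)
  then have "[r ^ a = r ^ (a mod n)] (mod m)" unfolding e by simp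
  then show ?thesis by (rule cong_sym)
qed

lemma ZM_mult: "(a, b) \<otimes>\<^bsub>ZM m n r\<^esub> (c, e) = ((a * r ^ e + c) mod m, (b + e) mod n)"
  by (simp add: ZM_def)
lemma ZM_one: "\<one>\<^bsub>ZM m n r\<^esub> = (0, 0)"
  by (simp add: ZM_def)
lemma ZM_carrier: "carrier (ZM m n r) = {0..<m} \<times> {0..<n}"
  by (simp add: ZM_def)

lemma ZM_group:
  assumes "0 < m" "0 < n" "[r ^ n = 1] (mod m)"
  shows "group (ZM m n r)"
proof (rule groupI)
  fix x y assume "x \<in> carrier (ZM m n r)" "y \<in> carrier (ZM m n r)"
  then show "x \<otimes>\<^bsub>ZM m n r\<^esub> y \<in> carrier (ZM m n r)"
    using assms by (cases x; cases y) (simp add: ZM_def)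
next
  show "\<one>\<^bsub>ZM m n r\<^esub> \<in> carrier (ZM m n r)" using assms by (simp add: ZM_def)
next
  fix x assume "x \<in> carrier (ZM m n r)"
  then show "\<one>\<^bsub>ZM m n r\<^esub> \<otimes>\<^bsub>ZM m n r\<^esub> x = x"
    by (cases x) (simp add: ZM_def)
next
  fix x y z assume xyz: "x \<in> carrier (ZM m n r)" "y \<in> carrier (ZM m n r)" "z \<in> carrier (ZM m n r)"
  obtain a b where x: "x = (a,b)" by force
  obtain c e where y: "y = (c,e)" by force
  obtain f g where z: "z = (f,g)" by force
  have 1: "((a * r ^ e + c) mod m * r ^ g + f) mod m = (a * r^e * r^g + c * r^g + f) mod m"
    by (metis (no_types, lifting) distrib_right mod_add_left_eq mod_mult_left_eq)
  have "[a * r ^ ((e + g) mod n) = a * r ^ (e+g)] (mod m)"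
    by (intro cong_mult cong_refl rpow_mod assms)
  then have "[a * r ^ ((e + g) mod n) + (c * r ^ g + f) mod m = a * r ^ (e+g) + (c * r ^ g + f)] (mod m)"
    by (intro cong_add) (simp_all add: cong_def)
  then have 2: "(a * r ^ ((e + g) mod n) + (c * r ^ g + f) mod m) mod m = (a * r^e * r^g + c * r^g + f) mod m"
    unfolding cong_def by (simp add: power_add mult.assoc add.assoc)
  have 3: "((b + e) mod n + g) mod n = (b + (e + g) mod n) mod n"
    by (metis add.assoc mod_add_left_eq mod_add_right_eq)
  show "x \<otimes>\<^bsub>ZM m n r\<^esub> y \<otimes>\<^bsub>ZM m n r\<^esub> z = x \<otimes>\<^bsub>ZM m n r\<^esub> (y \<otimes>\<^bsub>ZM m n r\<^esub> z)"
    unfolding x y z ZM_mult using 1 2 3 by (metis (no_types))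
next
  fix x assume "x \<in> carrier (ZM m n r)"
  then obtain a b where x: "x = (a,b)" "a < m" "b < n" by (cases x) (simp add: ZM_def)
  define b' where "b' = (n - b) mod n"
  define a' where "a' = (a * (m - 1) * r ^ b') mod m"
  have bb: "(b' + b) mod n = 0"
    using x(3) by (cases "b = 0") (simp_all add: b'_def)
  have "[r ^ (b' + b) = 1] (mod m)"
    using rpow_mod[OF assms(3), of "b' + b"] bb by (metis cong_sym power_0)
  then have "[a * (m - 1) * r ^ (b' + b) = a * (m - 1) * 1] (mod m)"
    by (intro cong_mult cong_refl)
  moreover have "[a' * r ^ b = a * (m - 1) * r ^ (b' + b)] (mod m)"
  proof -
    have "[a' * r ^ b = (a * (m - 1) * r ^ b') * r ^ b] (mod m)"
      unfolding a'_def by (intro cong_mult cong_refl) (simp add: cong_def)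
    then show ?thesis by (simp add: power_add mult.assoc)
  qed
  ultimately have "[a' * r ^ b + a = a * (m - 1) * 1 + a] (mod m)"
    by (intro cong_add cong_refl) (rule cong_trans)
  moreover have "a * (m - 1) * 1 + a = a * m" using assms(1)
    by (metis add.commute mult.right_neutral mult_Suc_right Suc_diff_1)
  ultimately have aa: "(a' * r ^ b + a) mod m = 0"
    unfolding cong_def by simp
  have "(a', b') \<in> carrier (ZM m n r)" using assms by (simp add: ZM_def a'_def b'_def)
  moreover have "(a', b') \<otimes>\<^bsub>ZM m n r\<^esub> x = \<one>\<^bsub>ZM m n r\<^esub>"
    unfolding x ZM_mult ZM_one using aa bb by simp
  ultimately show "\<exists>y\<in>carrier (ZM m n r). y \<otimes>\<^bsub>ZM m n r\<^esub> x = \<one>\<^bsub>ZM m n r\<^esub>"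
    by blast
qed


lemma ZM_pow:
  "(i, j) [^]\<^bsub>ZM m n r\<^esub> (k::nat) = ((i * (\<Sum>t<k. r ^ (j * t))) mod m, (j * k) mod n)"
proof (induction k)
  case 0
  then show ?case by (simp add: nat_pow_def ZM_one)
next
  case (Suc k)
  have "(i, j) [^]\<^bsub>ZM m n r\<^esub> Suc k = (i, j) [^]\<^bsub>ZM m n r\<^esub> k \<otimes>\<^bsub>ZM m n r\<^esub> (i, j)"
    by (simp add: nat_pow_def)
  also have "\<dots> = (((i * (\<Sum>t<k. r ^ (j * t))) mod m * r ^ j + i) mod m, ((j * k) mod n + j) mod n)"
    unfolding Suc ZM_mult ..
  also have "((i * (\<Sum>t<k. r ^ (j * t))) mod m * r ^ j + i) mod m = (i * (\<Sum>t<Suc k. r ^ (j * t))) mod m"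
  proof -
    have "(\<Sum>t<Suc k. r ^ (j * t)) = 1 + r ^ j * (\<Sum>t<k. r ^ (j * t))"
      by (subst sum.lessThan_Suc_shift) (simp add: sum_distrib_left power_add)
    then have "i * (\<Sum>t<Suc k. r ^ (j * t)) = (i * (\<Sum>t<k. r ^ (j * t))) * r ^ j + i"
      by (simp add: algebra_simps)
    then show ?thesis by (metis mod_add_left_eq mod_mult_left_eq)
  qed
  also have "((j * k) mod n + j) mod n = (j * Suc k) mod n"
    by (metis add.commute mod_add_left_eq mult_Suc_right)
  finally show ?case .
qed

definition Cn :: "nat \<Rightarrow> nat \<Rightarrow> nat" where "Cn k j = k div gcd j k"

lemma dvd_mult_iff_Cn:
  assumes "0 < n"
  shows "n dvd j * k \<longleftrightarrow> Cn n j dvd k"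
proof -
  define g where "g = gcd j n"
  have g0: "g > 0" using assms by (simp add: g_def)
  define n' where "n' = n div g"
  define j' where "j' = j div g"
  have n': "n = g * n'" unfolding n'_def g_def by simp
  have j': "j = g * j'" unfolding j'_def g_def by simp
  have cop: "coprime n' j'"
    using div_gcd_coprime[of j n] assms unfolding n'_def j'_def g_def
    by (simp add: coprime_commute)
  have C: "Cn n j = n'" unfolding Cn_def n'_def g_def ..
  have "n dvd j * k \<longleftrightarrow> g * n' dvd g * (j' * k)" using n' j' by (simp add: mult.assoc)
  also have "\<dots> \<longleftrightarrow> n' dvd j' * k" using g0 by simp
  also have "\<dots> \<longleftrightarrow> n' dvd k" using cop by (simp add: coprime_dvd_mult_right_iff)
  finally show ?thesis using C by simp
qed

lemma geo_nat: "((x::nat) - 1) * (\<Sum>t<k. x ^ t) = x ^ k - 1"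
proof (cases "x = 0")
  case True
  then show ?thesis by (cases k) simp_all
next
  case False
  then have "x \<ge> 1" by simp
  have "int ((x - 1) * (\<Sum>t<k. x ^ t)) = (int x - 1) * (\<Sum>t<k. int x ^ t)"
    using \<open>x \<ge> 1\<close> by (simp add: of_nat_diff)
  also have "\<dots> = int x ^ k - 1" by (simp add: power_diff_1_eq)
  also have "\<dots> = int (x ^ k - 1)" using \<open>x \<ge> 1\<close> by (simp add: of_nat_diff)
  finally show ?thesis by linarith
qed


lemma Cn_dvd: "Cn k j dvd k"
proof -
  have "k div gcd j k * gcd j k = k" by (rule dvd_div_mult_self) simp
  then show ?thesis unfolding Cn_def by (metis dvd_triv_left)
qed

lemma ZM_pow_one:
  "(i, j) [^]\<^bsub>ZM m n r\<^esub> (k::nat) = \<one>\<^bsub>ZM m n r\<^esub> \<longleftrightarrow>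
     m dvd i * (\<Sum>t<k. r ^ (j * t)) \<and> n dvd j * k"
  unfolding ZM_pow ZM_one by (simp add: dvd_eq_mod_eq_0)

lemma ord_ZM_central:
  assumes grp: "group (ZM m n r)" and m: "0 < m" and n: "0 < n" and cop: "coprime m n"
    and ij: "i < m" "j < n" and rj: "[r ^ j = 1] (mod m)"
  shows "group.ord (ZM m n r) (i, j) = Cn m i * Cn n j"
proof -
  have car: "(i, j) \<in> carrier (ZM m n r)" using ij by (simp add: ZM_carrier)
  have "(i, j) [^]\<^bsub>ZM m n r\<^esub> k = \<one>\<^bsub>ZM m n r\<^esub> \<longleftrightarrow> Cn m i * Cn n j dvd k" for k :: nat
  proof -
    have "[(\<Sum>t<k. r ^ (j * t)) = (\<Sum>t<k. 1)] (mod m)"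
    proof (rule cong_sum)
      fix t
      have "[(r ^ j) ^ t = 1 ^ t] (mod m)" by (rule cong_pow[OF rj])
      then show "[r ^ (j * t) = 1] (mod m)" by (simp add: power_mult)
    qed
    then have "[i * (\<Sum>t<k. r ^ (j * t)) = i * k] (mod m)"
      by (intro cong_mult cong_refl) simp
    then have "m dvd i * (\<Sum>t<k. r ^ (j * t)) \<longleftrightarrow> m dvd i * k"
      by (rule cong_dvd_iff)
    also have "\<dots> \<longleftrightarrow> Cn m i dvd k" by (rule dvd_mult_iff_Cn[OF m])
    finally have 1: "m dvd i * (\<Sum>t<k. r ^ (j * t)) \<longleftrightarrow> Cn m i dvd k" .
    have 2: "n dvd j * k \<longleftrightarrow> Cn n j dvd k" by (rule dvd_mult_iff_Cn[OF n])
    have cc: "coprime (Cn m i) (Cn n j)"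
      by (rule coprime_divisors[OF Cn_dvd Cn_dvd cop])
    have "Cn m i dvd k \<and> Cn n j dvd k \<longleftrightarrow> Cn m i * Cn n j dvd k"
    proof
      assume "Cn m i dvd k \<and> Cn n j dvd k"
      then show "Cn m i * Cn n j dvd k" using cc by (intro divides_mult) simp_all
    next
      assume h: "Cn m i * Cn n j dvd k"
      show "Cn m i dvd k \<and> Cn n j dvd k" using dvd_mult_left[OF h] dvd_mult_right[OF h] by simp
    qed
    then show ?thesis unfolding ZM_pow_one 1 2 .
  qed
  then show ?thesis using group.ord_unique[OF grp car] by blast
qed

lemma ord_ZM_noncentral:
  assumes grp: "group (ZM m n r)" and m: "0 < m" and n: "0 < n"
    and ij: "i < m" "j < n" and rn: "[r ^ n = 1] (mod m)" and cj: "coprime m (r ^ j - 1)"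
  shows "group.ord (ZM m n r) (i, j) = Cn n j"
proof -
  have car: "(i, j) \<in> carrier (ZM m n r)" using ij by (simp add: ZM_carrier)
  have "(i, j) [^]\<^bsub>ZM m n r\<^esub> k = \<one>\<^bsub>ZM m n r\<^esub> \<longleftrightarrow> Cn n j dvd k" for k :: nat
  proof -
    have "m dvd i * (\<Sum>t<k. r ^ (j * t))" if nd: "n dvd j * k"
    proof -
      obtain c where c: "j * k = n * c" using nd by (rule dvdE)
      have "[(r ^ n) ^ c = 1 ^ c] (mod m)" by (rule cong_pow[OF rn])
      then have "[(r ^ j) ^ k = 1] (mod m)" by (simp add: c power_mult[symmetric])
      then have "m dvd (r ^ j) ^ k - 1" by (rule cong_to_1_nat)
      also have "(r ^ j) ^ k - 1 = (r ^ j - 1) * (\<Sum>t<k. (r ^ j) ^ t)" by (rule geo_nat[symmetric])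
      finally have "m dvd (\<Sum>t<k. (r ^ j) ^ t)" using cj by (simp add: coprime_dvd_mult_right_iff)
      then show ?thesis by (simp add: power_mult)
    qed
    then show ?thesis unfolding ZM_pow_one dvd_mult_iff_Cn[OF n] by blast
  qed
  then show ?thesis using group.ord_unique[OF grp car] by blast
qed


lemma ord_carrier_update:
  assumes "group G" "subgroup H G"
  shows "group.ord (G\<lparr>carrier := H\<rparr>) x = group.ord G x"
proof -
  have "group (G\<lparr>carrier := H\<rparr>)" using assms by (simp add: group.subgroup_imp_group)
  then show ?thesis using assms(1) by (simp add: group.ord_def nat_pow_def)
qed

lemma lift_cong:
  fixes p x :: nat
  assumes p: "Factorial_Ring.prime p" and x: "[x = 1] (mod p)"
  shows "[x ^ (p ^ k) = 1] (mod p ^ Suc k)"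
proof (induction k)
  case 0
  then show ?case using x by simp
next
  case (Suc k)
  define y where "y = x ^ (p ^ k)"
  have hy: "[y = 1] (mod p ^ Suc k)" using Suc by (simp add: y_def)
  have p1: "p > 1" using p prime_gt_1_nat by blast
  have y1: "y \<ge> 1"
  proof (rule ccontr)
    assume "\<not> y \<ge> 1"
    then have "y = 0" by simp
    then have "[0 = 1] (mod p ^ Suc k)" using hy by simp
    then have "p ^ Suc k dvd 1" by (simp add: cong_def)
    then have "p ^ Suc k = 1" by simp
    then show False using p1 by simp
  qed
  have d1: "p ^ Suc k dvd y - 1" using hy by (rule cong_to_1_nat)
  have hyp: "[y = 1] (mod p)" using hy by (rule cong_dvd_modulus_nat) simp
  have "[(\<Sum>t<p. y ^ t) = (\<Sum>t<p. 1)] (mod p)"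
  proof (rule cong_sum)
    fix t show "[y ^ t = 1] (mod p)" using cong_pow[OF hyp, of t] by simp
  qed
  then have "[(\<Sum>t<p. y ^ t) = 0] (mod p)" by (simp add: cong_def)
  then have d2: "p dvd (\<Sum>t<p. y ^ t)" by (simp add: cong_0_iff)
  from mult_dvd_mono[OF d1 d2] have "p ^ Suc k * p dvd y ^ p - 1" by (simp only: geo_nat)
  then have "p ^ Suc (Suc k) dvd y ^ p - 1" by (simp only: power_Suc2)
  moreover have "y ^ p \<ge> 1" using y1 by simp
  ultimately have "[y ^ p = 1] (mod p ^ Suc (Suc k))" by (simp add: cong_altdef_nat)
  moreover have "x ^ (p ^ Suc k) = y ^ p" unfolding y_def power_mult[symmetric] by (simp only: power_Suc2)
  ultimately show ?case by simp
qed

lemma coprime_rj: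
  fixes p m n r j \<alpha> :: nat
  assumes p: "Factorial_Ring.prime p" and m: "m = p ^ \<alpha>" and a: "0 < \<alpha>" and rn: "[r ^ n = 1] (mod m)"
    and cop: "coprime m n" and r: "0 < r" and nd: "\<not> ord m r dvd j"
  shows "coprime m (r ^ j - 1)"
proof -
  have "\<not> p dvd r ^ j - 1"
  proof
    assume "p dvd r ^ j - 1"
    moreover have "r ^ j \<ge> 1" using r by simp
    ultimately have "[r ^ j = 1] (mod p)" by (simp add: cong_altdef_nat)
    then have "[(r ^ j) ^ (p ^ (\<alpha> - 1)) = 1] (mod p ^ Suc (\<alpha> - 1))" by (rule lift_cong[OF p])
    then have "[r ^ (j * p ^ (\<alpha> - 1)) = 1] (mod m)" using a m by (simp add: power_mult)
    then have d: "ord m r dvd j * p ^ (\<alpha> - 1)" by (rule ord_divides[THEN iffD1])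
    have "ord m r dvd n" using rn by (rule ord_divides[THEN iffD1])
    moreover have "coprime n (p ^ (\<alpha> - 1))"
    proof -
      have "p ^ (\<alpha> - 1) dvd m" unfolding m by (rule le_imp_power_dvd) simp
      then show ?thesis using cop by (metis coprime_commute coprime_divisors dvd_refl)
    qed
    ultimately have "coprime (ord m r) (p ^ (\<alpha> - 1))" by (rule coprime_divisors[OF _ dvd_refl])
    then have "ord m r dvd j" using d by (simp add: coprime_dvd_mult_left_iff)
    then show False using nd by simp
  qed
  then have "coprime p (r ^ j - 1)" using p by (rule prime_imp_coprime[rotated])
  then show ?thesis unfolding m by simp
qed


lemma Cn_unique:
  assumes "0 < n" "\<And>k. n dvd j * k \<longleftrightarrow> c dvd k"
  shows "Cn n j = c"
proof -
  have h: "Cn n j dvd k \<longleftrightarrow> c dvd k" for k using assms dvd_mult_iff_Cn[OF assms(1)] by simp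
  show ?thesis using h[of c] h[of "Cn n j"] by (simp add: dvd_antisym)
qed

lemma Cn_mod: "0 < a \<Longrightarrow> Cn a (j mod a) = Cn a j"
proof (rule Cn_unique)
  fix k assume a: "0 < a"
  have "[j mod a * k = j * k] (mod a)" by (intro cong_mult cong_refl) (simp add: cong_def)
  then have "a dvd j mod a * k \<longleftrightarrow> a dvd j * k" by (rule cong_dvd_iff)
  then show "a dvd j mod a * k \<longleftrightarrow> Cn a j dvd k" using dvd_mult_iff_Cn[OF a] by simp
qed

lemma Cn_mult:
  assumes cop: "coprime a b" and a: "0 < a" and b: "0 < b"
  shows "Cn (a * b) j = Cn a (j mod a) * Cn b (j mod b)"
proof -
  have ab: "0 < a * b" using a b by simp
  have cc: "coprime (Cn a j) (Cn b j)" by (rule coprime_divisors[OF Cn_dvd Cn_dvd cop])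
  have "a * b dvd j * k \<longleftrightarrow> Cn a j * Cn b j dvd k" for k
  proof -
    have "a * b dvd j * k \<longleftrightarrow> a dvd j * k \<and> b dvd j * k"
    proof
      assume h: "a * b dvd j * k"
      show "a dvd j * k \<and> b dvd j * k" using dvd_mult_left[OF h] dvd_mult_right[OF h] by simp
    next
      assume "a dvd j * k \<and> b dvd j * k"
      then show "a * b dvd j * k" using cop by (intro divides_mult) simp_all
    qed
    also have "\<dots> \<longleftrightarrow> Cn a j dvd k \<and> Cn b j dvd k"
      using dvd_mult_iff_Cn[OF a] dvd_mult_iff_Cn[OF b] by simp
    also have "\<dots> \<longleftrightarrow> Cn a j * Cn b j dvd k"
    proof
      assume "Cn a j dvd k \<and> Cn b j dvd k"
      then show "Cn a j * Cn b j dvd k" using cc by (intro divides_mult) simp_all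
    next
      assume h: "Cn a j * Cn b j dvd k"
      show "Cn a j dvd k \<and> Cn b j dvd k" using dvd_mult_left[OF h] dvd_mult_right[OF h] by simp
    qed
    finally show ?thesis .
  qed
  then have "Cn (a * b) j = Cn a j * Cn b j" by (rule Cn_unique[OF ab])
  then show ?thesis using Cn_mod[OF a] Cn_mod[OF b] by simp
qed

lemma crt_sum:
  fixes a b :: nat and f g :: "nat \<Rightarrow> nat"
  assumes cop: "coprime a b" and a: "0 < a" and b: "0 < b"
  shows "(\<Sum>j<a * b. f (j mod a) * g (j mod b)) = (\<Sum>u<a. f u) * (\<Sum>v<b. g v)"
proof -
  define h where "h = (\<lambda>j::nat. (j mod a, j mod b))"
  have inj: "inj_on h {..<a * b}"
  proof (rule inj_onI)
    fix x y assume x: "x \<in> {..<a * b}" and y: "y \<in> {..<a * b}" and e: "h x = h y"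
    have "[x = y] (mod a)" "[x = y] (mod b)" using e by (simp_all add: h_def cong_def)
    then have "[x = y] (mod a * b)" using cop by (intro coprime_cong_mult_nat)
    then show "x = y" using x y by (simp add: cong_def)
  qed
  have sub: "h ` {..<a * b} \<subseteq> {..<a} \<times> {..<b}" using a b by (auto simp: h_def)
  have "card (h ` {..<a * b}) = card ({..<a} \<times> {..<b})"
    using card_image[OF inj] by (simp add: card_cartesian_product)
  then have eq: "h ` {..<a * b} = {..<a} \<times> {..<b}"
    using sub by (intro card_subset_eq) auto
  have "(\<Sum>j<a * b. f (j mod a) * g (j mod b)) = (\<Sum>j<a * b. (\<lambda>(u, v). f u * g v) (h j))"
    by (simp add: h_def)
  also have "\<dots> = (\<Sum>x\<in>h ` {..<a * b}. (\<lambda>(u, v). f u * g v) x)"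
    using sum.reindex[OF inj, of "\<lambda>(u, v). f u * g v"] by (simp add: comp_def)
  also have "\<dots> = (\<Sum>x\<in>{..<a} \<times> {..<b}. (\<lambda>(u, v). f u * g v) x)" by (simp only: eq)
  also have "\<dots> = (\<Sum>u<a. \<Sum>v<b. f u * g v)" by (simp add: sum.cartesian_product)
  also have "\<dots> = (\<Sum>u<a. f u) * (\<Sum>v<b. g v)" by (simp add: sum_product)
  finally show ?thesis .
qed

lemma Cn_zero: "0 < n \<Longrightarrow> Cn n 0 = 1"
  by (simp add: Cn_def)

lemma Cn_le: "Cn n j \<le> n"
  by (simp add: Cn_def)

lemma P_cong:
  fixes p \<alpha> :: nat
  assumes p: "Factorial_Ring.prime p" and a: "0 < \<alpha>"
  shows "[(\<Sum>i<p ^ \<alpha>. Cn (p ^ \<alpha>) i) = 1] (mod p)"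
proof -
  define m where "m = p ^ \<alpha>"
  have p1: "p > 1" using p prime_gt_1_nat by blast
  have m1: "m > 1" unfolding m_def using p1 a by (rule one_less_power)
  have dv: "p dvd Cn m i" if i: "i \<in> {Suc 0..<m}" for i
  proof -
    have "Cn m i dvd p ^ \<alpha>" using Cn_dvd[of m i] by (simp add: m_def)
    then obtain k where k: "k \<le> \<alpha>" "Cn m i = p ^ k" using divides_primepow_nat[OF p] by blast
    have "k \<noteq> 0"
    proof
      assume "k = 0"
      then have c1: "m div gcd i m = 1" using k by (simp add: Cn_def)
      have "m div gcd i m * gcd i m = m" by (rule dvd_div_mult_self) simp
      then have "gcd i m = m" using c1 by simp
      then have "m dvd i" by (metis gcd_dvd1)
      then show False using i by (auto dest: dvd_imp_le)
    qed
    then show ?thesis using k by simp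
  qed
  have "(\<Sum>i<m. Cn m i) = (\<Sum>i\<in>{0..<m}. Cn m i)" by (simp add: atLeast0LessThan)
  also have "\<dots> = Cn m 0 + (\<Sum>i\<in>{Suc 0..<m}. Cn m i)" using m1 by (simp add: sum.atLeast_Suc_lessThan)
  also have "\<dots> = 1 + (\<Sum>i\<in>{Suc 0..<m}. Cn m i)" using m1 by (simp add: Cn_zero)
  finally have e: "(\<Sum>i<m. Cn m i) = 1 + (\<Sum>i\<in>{Suc 0..<m}. Cn m i)" .
  have "p dvd (\<Sum>i\<in>{Suc 0..<m}. Cn m i)" by (rule dvd_sum) (rule dv)
  then have "[(\<Sum>i\<in>{Suc 0..<m}. Cn m i) = 0] (mod p)" by (simp add: cong_0_iff)
  then have "[1 + (\<Sum>i\<in>{Suc 0..<m}. Cn m i) = 1 + 0] (mod p)" by (intro cong_add cong_refl)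
  then show ?thesis using e by (simp add: m_def)
qed

lemma P_ge:
  fixes p \<alpha> :: nat
  assumes p: "Factorial_Ring.prime p" and a: "0 < \<alpha>"
  shows "p ^ \<alpha> * totient (p ^ \<alpha>) \<le> (\<Sum>i<p ^ \<alpha>. Cn (p ^ \<alpha>) i)"
proof -
  define m where "m = p ^ \<alpha>"
  have p1: "p > 1" using p prime_gt_1_nat by blast
  have m1: "m > 1" unfolding m_def using p1 a by (rule one_less_power)
  have sub: "totatives m \<subseteq> {..<m}"
  proof
    fix i assume "i \<in> totatives m"
    then have "0 < i" "i \<le> m" "coprime i m" by (simp_all add: in_totatives_iff)
    moreover have "i \<noteq> m" using \<open>coprime i m\<close> m1 by auto
    ultimately show "i \<in> {..<m}" by simp
  qed
  have "m * totient m = (\<Sum>i\<in>totatives m. m)" by (simp add: totient_def)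
  also have "\<dots> = (\<Sum>i\<in>totatives m. Cn m i)"
  proof (rule sum.cong[OF refl])
    fix i assume "i \<in> totatives m"
    then have "coprime i m" by (simp add: in_totatives_iff)
    then show "m = Cn m i" by (simp add: Cn_def)
  qed
  also have "\<dots> \<le> (\<Sum>i<m. Cn m i)" by (rule sum_mono2[OF _ sub]) simp_all
  finally show ?thesis by (simp add: m_def)
qed

lemma prod_primes_dvd:
  fixes q :: "nat \<Rightarrow> nat"
  assumes "finite S" "inj_on q S" "\<forall>i\<in>S. Factorial_Ring.prime (q i) \<and> q i dvd d"
  shows "(\<Prod>i\<in>S. q i) dvd d"
  using assms
proof (induction S rule: finite_induct)
  case empty
  then show ?case by simp
next
  case (insert x F)
  have cop: "coprime (q x) (\<Prod>i\<in>F. q i)"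
  proof (rule prod_coprime_right)
    fix i assume i: "i \<in> F"
    have "q x \<noteq> q i" using insert.prems(1) insert.hyps(2) i by (auto simp: inj_on_def)
    then show "coprime (q x) (q i)" using insert.prems(2) i by (intro primes_coprime) auto
  qed
  have "(\<Prod>i\<in>F. q i) dvd d" using insert.IH insert.prems by (auto simp: inj_on_insert)
  moreover have "q x dvd d" using insert.prems by simp
  ultimately have "q x * (\<Prod>i\<in>F. q i) dvd d" using cop by (intro divides_mult)
  then show ?case using insert.hyps by simp
qed


theorem proposition2p4:
  fixes m n r p \<alpha> s :: nat and q \<beta> :: "nat \<Rightarrow> nat"
  assumes "0 < m" and "0 < n" and "0 < r"
    and "coprime m n" and "coprime m (r - 1)" and "[r ^ n = 1] (mod m)"
    and "Factorial_Ring.prime p" and "0 < \<alpha>" and "m = p ^ \<alpha>"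
    and "\<forall>i\<in>{1..s}. Factorial_Ring.prime (q i) \<and> 0 < \<beta> i"
    and "inj_on q {1..s}"
    and "n = (\<Prod>i\<in>{1..s}. q i ^ \<beta> i)"
    and "\<forall>i\<in>{i\<in>{1..s}. q i dvd p - 1}. \<beta> i \<le> \<alpha>"
  shows "\<not> psi_divisible (ZM m n r)"
proof
  assume div: "psi_divisible (ZM m n r)"
  note m0 = assms(1) and n0 = assms(2) and r0 = assms(3) and cop = assms(4) and cr = assms(5)
    and rn = assms(6) and p = assms(7) and a0 = assms(8) and mp = assms(9) and qprime = assms(10)
    and qinj = assms(11) and nprod = assms(12) and bnd = assms(13)
  define G where "G = ZM m n r"
  define d where "d = ord m r"
  define P where "P = (\<Sum>i<m. Cn m i)"
  have p1: "p > 1" using p prime_gt_1_nat by blast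
  have m1: "m > 1" unfolding mp using p1 a0 by (rule one_less_power)
  have grp: "group G" unfolding G_def using m0 n0 rn by (rule ZM_group)
  have dn: "d dvd n" unfolding d_def using rn by (rule ord_divides[THEN iffD1])
  have dpos: "d > 0" using dn n0 by (auto intro: Nat.gr0I)
  have d1: "d \<noteq> 1"
  proof
    assume "d = 1"
    then have "[r = 1] (mod m)" unfolding d_def using ord_eq_Suc_0_iff by simp
    then have "m dvd r - 1" by (rule cong_to_1_nat)
    then have "is_unit m" using cr coprime_absorb_left by blast
    then show False using m1 by simp
  qed
  have cnp: "coprime n (p ^ (\<alpha> - 1))"
  proof -
    have "p ^ (\<alpha> - 1) dvd m" unfolding mp by (rule le_imp_power_dvd) simp
    then show ?thesis using cop by (metis coprime_commute coprime_divisors dvd_refl)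
  qed
  have dp: "d dvd p - 1"
  proof -
    have "coprime m r" using dpos unfolding d_def by simp
    then have "[r ^ totient m = 1] (mod m)" by (intro euler_theorem) (simp add: coprime_commute)
    then have "d dvd totient m" unfolding d_def by (rule ord_divides[THEN iffD1])
    then have "d dvd p ^ (\<alpha> - 1) * (p - 1)" using totient_prime_power[OF p a0] mp by simp
    moreover have "coprime d (p ^ (\<alpha> - 1))" using dn cnp by (rule coprime_divisors[OF _ dvd_refl])
    ultimately show ?thesis by (simp add: coprime_dvd_mult_right_iff)
  qed
  have ordf: "group.ord G (i, j) = (if d dvd j then Cn m i * Cn n j else Cn n j)"
    if ij: "i < m" "j < n" for i j
  proof (cases "d dvd j")
    case True
    then have "[r ^ j = 1] (mod m)" unfolding d_def by (rule ord_divides[THEN iffD2])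
    then show ?thesis using True ord_ZM_central[OF grp[unfolded G_def] m0 n0 cop ij] by (simp add: G_def)
  next
    case False
    have "coprime m (r ^ j - 1)" using p mp a0 rn cop r0 False unfolding d_def by (rule coprime_rj)
    then show ?thesis using False ord_ZM_noncentral[OF grp[unfolded G_def] m0 n0 ij rn] by (simp add: G_def)
  qed
  have carG: "carrier G = {..<m} \<times> {..<n}" by (simp add: G_def ZM_carrier atLeast0LessThan)
  have psiG: "psi G = (\<Sum>j<n. (if d dvd j then P else m) * Cn n j)"
  proof -
    have "psi G = (\<Sum>x\<in>{..<m} \<times> {..<n}. group.ord G x)" by (simp add: psi_def carG)
    also have "\<dots> = (\<Sum>x\<in>{..<m} \<times> {..<n}. (\<lambda>(i, j). if d dvd j then Cn m i * Cn n j else Cn n j) x)"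
      by (rule sum.cong[OF refl]) (auto simp: ordf)
    also have "\<dots> = (\<Sum>i<m. \<Sum>j<n. if d dvd j then Cn m i * Cn n j else Cn n j)"
      by (simp add: sum.cartesian_product)
    also have "\<dots> = (\<Sum>j<n. \<Sum>i<m. if d dvd j then Cn m i * Cn n j else Cn n j)"
      by (rule sum.swap)
    also have "\<dots> = (\<Sum>j<n. (if d dvd j then P else m) * Cn n j)"
      by (rule sum.cong[OF refl]) (simp add: P_def sum_distrib_right)
    finally show ?thesis .
  qed
  define H where "H = {..<m} \<times> {j \<in> {..<n}. d dvd j}"
  have sg: "subgroup H G"
  proof -
    have "H \<subseteq> carrier G" by (auto simp: H_def carG)
    moreover have "x \<otimes>\<^bsub>G\<^esub> y \<in> H" if "x \<in> H" "y \<in> H" for x y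
    proof -
      obtain a b where x: "x = (a, b)" "a < m" "b < n" "d dvd b" using \<open>x \<in> H\<close> by (auto simp: H_def)
      obtain c e where y: "y = (c, e)" "c < m" "e < n" "d dvd e" using \<open>y \<in> H\<close> by (auto simp: H_def)
      have "d dvd (b + e) mod n" using x y dn by (simp add: dvd_mod_iff)
      then show ?thesis using x y m0 n0 by (simp add: G_def ZM_mult H_def)
    qed
    moreover have "\<one>\<^bsub>G\<^esub> \<in> H" using m0 n0 by (simp add: G_def ZM_one H_def)
    moreover have "inv\<^bsub>G\<^esub> x \<in> H" if "x \<in> H" for x
    proof -
      obtain a b where x: "x = (a, b)" "a < m" "b < n" "d dvd b" using \<open>x \<in> H\<close> by (auto simp: H_def)
      have xc: "x \<in> carrier G" using x by (simp add: carG)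
      obtain c e where y: "inv\<^bsub>G\<^esub> x = (c, e)" by force
      have yc: "(c, e) \<in> carrier G" using group.inv_closed[OF grp xc] y by simp
      have "x \<otimes>\<^bsub>G\<^esub> inv\<^bsub>G\<^esub> x = \<one>\<^bsub>G\<^esub>" using group.r_inv[OF grp xc] .
      then have "(b + e) mod n = 0" using x y by (simp add: G_def ZM_mult ZM_one)
      then have "n dvd b + e" by (simp add: dvd_eq_mod_eq_0)
      then have "d dvd b + e" using dn by (rule dvd_trans[rotated])
      then have "d dvd e" using x(4) by (simp add: dvd_add_right_iff)
      then show ?thesis using y yc by (simp add: H_def carG)
    qed
    ultimately show ?thesis by (auto intro: subgroup.intro)
  qed
  have psiH: "psi (G\<lparr>carrier := H\<rparr>) = P * (\<Sum>j<n. if d dvd j then Cn n j else 0)"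
  proof -
    have "psi (G\<lparr>carrier := H\<rparr>) = (\<Sum>x\<in>H. group.ord G x)"
      by (simp add: psi_def ord_carrier_update[OF grp sg])
    also have "\<dots> = (\<Sum>x\<in>{..<m} \<times> {j \<in> {..<n}. d dvd j}. (\<lambda>(i, j). Cn m i * Cn n j) x)"
      unfolding H_def by (rule sum.cong[OF refl]) (auto simp: ordf)
    also have "\<dots> = (\<Sum>i<m. \<Sum>j\<in>{j \<in> {..<n}. d dvd j}. Cn m i * Cn n j)"
      by (simp add: sum.cartesian_product)
    also have "\<dots> = P * (\<Sum>j\<in>{j \<in> {..<n}. d dvd j}. Cn n j)"
      by (simp add: P_def sum_product)
    also have "(\<Sum>j\<in>{j \<in> {..<n}. d dvd j}. Cn n j) = (\<Sum>j<n. if d dvd j then Cn n j else 0)"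
      by (rule sum.inter_filter) simp
    finally show ?thesis .
  qed
  have hdvd: "psi (G\<lparr>carrier := H\<rparr>) dvd psi G"
    using div sg unfolding psi_divisible_def G_def by blast
  define S1 where "S1 = {i \<in> {1..s}. q i dvd d}"
  define S2 where "S2 = {i \<in> {1..s}. \<not> q i dvd d}"
  define n1 where "n1 = (\<Prod>i\<in>S1. q i ^ \<beta> i)"
  define n2 where "n2 = (\<Prod>i\<in>S2. q i ^ \<beta> i)"
  have fin: "finite S1" "finite S2" by (simp_all add: S1_def S2_def)
  have nn: "n = n1 * n2"
  proof -
    have "{1..s} = S1 \<union> S2" by (auto simp: S1_def S2_def)
    moreover have "S1 \<inter> S2 = {}" by (auto simp: S1_def S2_def)
    ultimately show ?thesis unfolding nprod n1_def n2_def using fin by (simp add: prod.union_disjoint)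
  qed
  have cop12: "coprime n1 n2"
    unfolding n1_def n2_def
  proof (intro prod_coprime_left prod_coprime_right)
    fix i j assume i: "i \<in> S1" and j: "j \<in> S2"
    have "q i \<noteq> q j" using i j by (auto simp: S1_def S2_def)
    then have "coprime (q i) (q j)" using i j qprime by (intro primes_coprime) (auto simp: S1_def S2_def)
    then show "coprime (q i ^ \<beta> i) (q j ^ \<beta> j)" by simp
  qed
  have n1pos: "n1 > 0" and n2pos: "n2 > 0" using nn n0 by simp_all
  have dn1: "d dvd n1"
  proof -
    have "coprime d n2" unfolding n2_def
    proof (rule prod_coprime_right)
      fix j assume j: "j \<in> S2"
      have "coprime (q j) d" using j qprime by (intro prime_imp_coprime) (auto simp: S2_def)
      then show "coprime d (q j ^ \<beta> j)" by (simp add: coprime_commute)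
    qed
    then show ?thesis using dn nn by (simp add: coprime_dvd_mult_left_iff)
  qed
  have n1le: "n1 \<le> (p - 1) ^ \<alpha>"
  proof -
    have "n1 \<le> (\<Prod>i\<in>S1. q i ^ \<alpha>)" unfolding n1_def
    proof (rule prod_mono)
      fix i assume i: "i \<in> S1"
      then have "q i dvd p - 1" using dp by (auto simp: S1_def intro: dvd_trans)
      then have "\<beta> i \<le> \<alpha>" using bnd i by (auto simp: S1_def)
      moreover have "q i > 0" using qprime i by (auto simp: S1_def prime_gt_0_nat)
      ultimately show "0 \<le> q i ^ \<beta> i \<and> q i ^ \<beta> i \<le> q i ^ \<alpha>" by (simp add: power_increasing)
    qed
    also have "\<dots> = (\<Prod>i\<in>S1. q i) ^ \<alpha>" by (simp add: prod_power_distrib)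
    also have "\<dots> \<le> (p - 1) ^ \<alpha>"
    proof (rule power_mono)
      have "inj_on q S1" using qinj by (rule inj_on_subset) (auto simp: S1_def)
      moreover have "\<forall>i\<in>S1. Factorial_Ring.prime (q i) \<and> q i dvd d" using qprime by (auto simp: S1_def)
      ultimately have "(\<Prod>i\<in>S1. q i) dvd d" using fin(1) by (intro prod_primes_dvd)
      then have "(\<Prod>i\<in>S1. q i) dvd p - 1" using dp by (rule dvd_trans)
      moreover have "p - 1 > 0" using p1 by simp
      ultimately show "(\<Prod>i\<in>S1. q i) \<le> p - 1" by (rule dvd_imp_le)
    qed simp
    finally show ?thesis .
  qed
  define QQ where "QQ = (\<Sum>v<n2. Cn n2 v)"
  define XX where "XX = (\<Sum>u<n1. if d dvd u then Cn n1 u else 0)"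
  define ZZ where "ZZ = (\<Sum>u<n1. if d dvd u then 0 else Cn n1 u)"
  have e1: "Cn n j = Cn n1 (j mod n1) * Cn n2 (j mod n2)" for j
    unfolding nn using cop12 n1pos n2pos by (rule Cn_mult)
  have e2: "d dvd j \<longleftrightarrow> d dvd j mod n1" for j using dn1 by (simp add: dvd_mod_iff)
  have psiG2: "psi G = (P * XX + m * ZZ) * QQ"
  proof -
    have "psi G = (\<Sum>j<n1 * n2. ((if d dvd j mod n1 then P else m) * Cn n1 (j mod n1)) * Cn n2 (j mod n2))"
      unfolding psiG by (rule sum.cong) (simp_all add: nn[symmetric] e1 e2[symmetric] mult.assoc)
    also have "\<dots> = (\<Sum>u<n1. (if d dvd u then P else m) * Cn n1 u) * QQ"
      unfolding QQ_def by (rule crt_sum[OF cop12 n1pos n2pos])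
    also have "(\<Sum>u<n1. (if d dvd u then P else m) * Cn n1 u) = P * XX + m * ZZ"
      unfolding XX_def ZZ_def sum_distrib_left sum.distrib[symmetric]
      by (rule sum.cong) auto
    finally show ?thesis .
  qed
  have psiH2: "psi (G\<lparr>carrier := H\<rparr>) = P * XX * QQ"
  proof -
    have "(\<Sum>j<n. if d dvd j then Cn n j else 0) =
      (\<Sum>j<n1 * n2. (if d dvd j mod n1 then Cn n1 (j mod n1) else 0) * Cn n2 (j mod n2))"
      by (rule sum.cong) (simp_all add: nn[symmetric] e1 e2[symmetric])
    also have "\<dots> = XX * QQ"
      unfolding QQ_def XX_def by (rule crt_sum[OF cop12 n1pos n2pos])
    finally show ?thesis unfolding psiH by simp
  qed
  have Qpos: "QQ > 0"
  proof -
    have "Cn n2 0 \<le> QQ" unfolding QQ_def by (rule member_le_sum) (simp_all add: n2pos)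
    then show ?thesis using Cn_zero[OF n2pos] by simp
  qed
  have copP: "coprime P m"
  proof -
    have c: "[P = 1] (mod p)" unfolding P_def mp by (rule P_cong[OF p a0])
    have "\<not> p dvd P"
    proof
      assume "p dvd P"
      then have "[P = 0] (mod p)" by (simp add: cong_0_iff)
      then have "[1 = 0] (mod p)" using c by (metis cong_sym cong_trans)
      then show False using p1 by (simp add: cong_def)
    qed
    then have "coprime p P" using p by (rule prime_imp_coprime[rotated])
    then show ?thesis unfolding mp by (simp add: coprime_commute)
  qed
  have "P * XX * QQ dvd (P * XX + m * ZZ) * QQ" using hdvd psiG2 psiH2 by simp
  then have "P * XX dvd P * XX + m * ZZ" using Qpos by simp
  then have "P * XX dvd m * ZZ" by (simp add: dvd_add_right_iff)
  then have "P dvd m * ZZ" by (rule dvd_mult_left)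
  then have PZ: "P dvd ZZ" using copP by (simp add: coprime_dvd_mult_right_iff)
  have d2: "d > 1" using dpos d1 by simp
  have n1gt: "n1 > 1" using dvd_imp_le[OF dn1 n1pos] d2 by simp
  have Zpos: "ZZ > 0"
  proof -
    have "(if d dvd 1 then 0 else Cn n1 1) \<le> ZZ" unfolding ZZ_def
      by (rule member_le_sum) (use n1gt in auto)
    moreover have "\<not> d dvd 1" using d2 by simp
    moreover have "Cn n1 1 = n1" by (simp add: Cn_def)
    ultimately show ?thesis using n1gt by simp
  qed
  have XZ: "XX + ZZ \<le> n1 * n1"
  proof -
    have "XX + ZZ = (\<Sum>u<n1. Cn n1 u)" unfolding XX_def ZZ_def sum.distrib[symmetric]
      by (rule sum.cong) auto
    also have "\<dots> \<le> card {..<n1} * n1"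
      using sum_bounded_above[of "{..<n1}" "Cn n1" n1] Cn_le by simp
    finally show ?thesis by simp
  qed
  have X1: "XX \<ge> 1"
  proof -
    have "(if d dvd 0 then Cn n1 0 else 0) \<le> XX" unfolding XX_def
      by (rule member_le_sum) (simp_all add: n1pos)
    then show ?thesis using Cn_zero[OF n1pos] by simp
  qed
  have "n1 * n1 \<le> (p - 1) ^ \<alpha> * ((p - 1) ^ (\<alpha> - 1) * (p - 1))"
  proof -
    have "(p - 1) ^ \<alpha> = (p - 1) ^ (\<alpha> - 1) * (p - 1)" using a0
      by (metis Suc_diff_1 power_Suc2)
    then show ?thesis using n1le by (metis mult_le_mono)
  qed
  also have "\<dots> \<le> p ^ \<alpha> * (p ^ (\<alpha> - 1) * (p - 1))"
    by (intro mult_le_mono power_mono le_refl) simp_all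
  also have "\<dots> = m * totient m" using totient_prime_power[OF p a0] mp by simp
  also have "\<dots> \<le> P" unfolding P_def mp by (rule P_ge[OF p a0])
  finally have "ZZ < P" using XZ X1 by simp
  then show False using dvd_imp_le[OF PZ Zpos] by simp
qed

end
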